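(* Let $V$ be a finite-dimensional real vector space and $\mathcal{C}\subset V$ an open convex cone with closure $\overline{\mathcal{C}}$. Every completely monotone function $f:\mathcal{C}\rightarrow\mathbb{R}_{+}$ satisfies \[ \sum_{i=1}^{n}f(x_{i})-\sum_{1\leq i<j\leq n}f(x_{i}+x_{j})+\cdots+(-1)^{n-1}f\Bigl(\sum_{i=1}^{n}x_{i}\Bigr)\geq 0 \] for all $x_{1},\ldots,x_{n}\in\mathcal{C}$ and $n\geq1$ (the general term being $(-1)^{k-1}\sum_{1\le i_1<\cdots<i_k\le n} f(x_{i_1}+\cdots+x_{i_k})$). If moreover $f$ admits a continuous extension to $\overline{\mathcal{C}}$, then \[ f(0)\geq\sum_{i=1}^{n}f(x_{i})-\sum_{1\leq i<j\leq n}f(x_{i}+x_{j})+\cdots+(-1)^{n-1}f\Bigl(\sum_{i=1}^{n}x_{i}\Bigr)\geq 0 \] for all $x_{1},\ldots,x_{n}\in\overline{\mathcal{C}}$ and $n\geq1$.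
   Context: A function $f:\mathcal{C}\rightarrow\mathbb{R}_{+}$ on an open convex cone $\mathcal{C}$ is completely monotone if $f$ is $C^{\infty}$ on $\mathcal{C}$ and for all integers $k\geq1$ and all $v_{1},\ldots,v_{k}\in\mathcal{C}$, $(-1)^{k}D_{v_{1}}\cdots D_{v_{k}}f(x)\geq0$ for all $x\in\mathcal{C}$, where $D_{v}$ is the directional derivative along $v$. *)

theory Defs
  imports "HOL-Analysis.Analysis"
begin

definition open_convex_cone :: "'a::real_normed_vector set \<Rightarrow> bool" where
  "open_convex_cone C \<longleftrightarrow> open C \<and> convex C \<and> (\<forall>x\<in>C. \<forall>t::real. t > 0 \<longrightarrow> t *\<^sub>R x \<in> C)"

definition dir_deriv :: "'a::real_normed_vector \<Rightarrow> ('a \<Rightarrow> real) \<Rightarrow> 'a \<Rightarrow> real" where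
  "dir_deriv v g x = deriv (\<lambda>t::real. g (x + t *\<^sub>R v)) 0"

fun iter_dir_deriv :: "'a::real_normed_vector list \<Rightarrow> ('a \<Rightarrow> real) \<Rightarrow> 'a \<Rightarrow> real" where
  "iter_dir_deriv [] g = g"
| "iter_dir_deriv (v # vs) g = dir_deriv v (iter_dir_deriv vs g)"

definition smooth_on :: "'a::euclidean_space set \<Rightarrow> ('a \<Rightarrow> real) \<Rightarrow> bool" where
  "smooth_on S g \<longleftrightarrow>
     (\<forall>vs. continuous_on S (iter_dir_deriv vs g)) \<and>
     (\<forall>vs v. \<forall>x\<in>S. (\<lambda>t::real. iter_dir_deriv vs g (x + t *\<^sub>R v)) differentiable (at 0))"

definition completely_monotone :: "'a::euclidean_space set \<Rightarrow> ('a \<Rightarrow> real) \<Rightarrow> bool" where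
  "completely_monotone C f \<longleftrightarrow>
     (\<forall>x\<in>C. f x \<ge> 0) \<and> smooth_on C f \<and>
     (\<forall>vs. vs \<noteq> [] \<longrightarrow> set vs \<subseteq> C \<longrightarrow>
        (\<forall>x\<in>C. (-1) ^ length vs * iter_dir_deriv vs f x \<ge> 0))"

definition alt_sum :: "('a::real_vector \<Rightarrow> real) \<Rightarrow> (nat \<Rightarrow> 'a) \<Rightarrow> nat \<Rightarrow> real" where
  "alt_sum f x n = (\<Sum>S \<in> {S. S \<subseteq> {1..n} \<and> S \<noteq> {}}. (-1) ^ (card S - 1) * f (\<Sum>i\<in>S. x i))"

end

theory Submission
  imports Defs
begin

definition DD :: "('a::real_vector \<Rightarrow> real) \<Rightarrow> nat \<Rightarrow> (nat \<Rightarrow> 'a) \<Rightarrow> 'a \<Rightarrow> real" where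
  "DD G n x y = (\<Sum>S \<in> Pow {1..n}. (-1) ^ card S * G (y + sum x S))"

lemma cone_add:
  assumes "open_convex_cone C" "a \<in> C" "b \<in> C"
  shows "a + b \<in> C"
proof -
  have cv: "convex C" and sc: "\<forall>x\<in>C. \<forall>t::real. t > 0 \<longrightarrow> t *\<^sub>R x \<in> C"
    using assms(1) unfolding open_convex_cone_def by auto
  have "(1/2::real) *\<^sub>R a + (1/2::real) *\<^sub>R b \<in> C"
    using cv assms(2,3) unfolding convex_def by auto
  then have "(2::real) *\<^sub>R ((1/2::real) *\<^sub>R a + (1/2::real) *\<^sub>R b) \<in> C"
    using sc by auto
  then show ?thesis by (simp add: scaleR_add_right)
qed

lemma cone_scale:
  assumes "open_convex_cone C" "a \<in> C" "t > 0"
  shows "t *\<^sub>R a \<in> C"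
  using assms unfolding open_convex_cone_def by auto

lemma cone_sum:
  assumes "open_convex_cone C" "finite S" "y \<in> C" "\<forall>i\<in>S. x i \<in> C"
  shows "y + sum x S \<in> C"
  using assms(2,4)
proof (induction S rule: finite_induct)
  case empty then show ?case using assms(3) by simp
next
  case (insert a S)
  then have "(y + sum x S) + x a \<in> C" using cone_add[OF assms(1)] by auto
  then show ?case using insert by (simp add: algebra_simps)
qed

lemma cone_closure_shift:
  fixes C :: "'a::euclidean_space set"
  assumes "open_convex_cone C" "x \<in> closure C" "c \<in> C" "(e::real) > 0"
  shows "x + e *\<^sub>R c \<in> C"
proof -
  have cv: "convex C" and op: "open C" using assms(1) unfolding open_convex_cone_def by auto
  have ci: "c \<in> interior C" using op assms(3) by (simp add: interior_open)
  define d where "d = e / (1 + e)"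
  have d0: "0 < d" "d \<le> 1" using assms(4) by (auto simp: d_def)
  have "x - d *\<^sub>R (x - c) \<in> interior C"
    by (rule mem_interior_closure_convex_shrink[OF cv ci assms(2) d0])
  then have m: "x - d *\<^sub>R (x - c) \<in> C" using interior_subset by blast
  have h: "(1 + e) * d = e" using assms(4) by (simp add: d_def)
  have "(1 + e) *\<^sub>R (x - d *\<^sub>R (x - c)) = (1 + e) *\<^sub>R x - ((1 + e) * d) *\<^sub>R (x - c)"
    by (simp add: scaleR_diff_right)
  also have "\<dots> = x + e *\<^sub>R c" unfolding h by (simp add: algebra_simps)
  finally have "(1 + e) *\<^sub>R (x - d *\<^sub>R (x - c)) = x + e *\<^sub>R c" .
  moreover have "(1 + e) *\<^sub>R (x - d *\<^sub>R (x - c)) \<in> C"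
    using cone_scale[OF assms(1) m] assms(4) by simp
  ultimately show ?thesis by simp
qed

lemma DD_Suc:
  "DD G (Suc n) x y = DD G n x y - DD G n x (y + x (Suc n))"
proof -
  have ins: "{1..Suc n} = insert (Suc n) {1..n}" by auto
  have nin: "Suc n \<notin> {1..n}" by simp
  have disj: "Pow {1..n} \<inter> insert (Suc n) ` Pow {1..n} = {}" by auto
  have inj: "inj_on (insert (Suc n)) (Pow {1..n})"
    by (rule inj_on_inverseI[where g="\<lambda>S. S - {Suc n}"]) auto
  have "DD G (Suc n) x y = (\<Sum>S \<in> Pow {1..n}. (-1) ^ card S * G (y + sum x S))
      + (\<Sum>S \<in> insert (Suc n) ` Pow {1..n}. (-1) ^ card S * G (y + sum x S))"
    unfolding DD_def ins Pow_insert by (rule sum.union_disjoint) (use disj in auto)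
  also have "(\<Sum>S \<in> insert (Suc n) ` Pow {1..n}. (-1) ^ card S * G (y + sum x S))
      = (\<Sum>S \<in> Pow {1..n}. (-1) ^ card (insert (Suc n) S) * G (y + sum x (insert (Suc n) S)))"
    by (rule sum.reindex[OF inj, unfolded comp_def])
  also have "\<dots> = (\<Sum>S \<in> Pow {1..n}. - ((-1) ^ card S * G ((y + x (Suc n)) + sum x S)))"
  proof (rule sum.cong)
    fix S assume "S \<in> Pow {1..n}"
    then have "finite S" "Suc n \<notin> S" using finite_subset by auto
    then show "(-1) ^ card (insert (Suc n) S) * G (y + sum x (insert (Suc n) S))
       = - ((-1) ^ card S * G ((y + x (Suc n)) + sum x S))"
      by (simp add: algebra_simps)
  qed simp
  finally show ?thesis unfolding DD_def by (simp add: sum_negf)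
qed

lemma DD_0: "DD G 0 x y = G y"
  unfolding DD_def by simp

lemma alt_sum_DD: "alt_sum f x n = f 0 - DD f n x 0"
proof -
  have fin: "finite (Pow {1..n})" by simp
  have dom: "{S. S \<subseteq> {1..n} \<and> S \<noteq> {}} = Pow {1..n} - {{}}" by auto
  have "DD f n x 0 = f 0 + (\<Sum>S \<in> Pow {1..n} - {{}}. (-1) ^ card S * f (0 + sum x S))"
    unfolding DD_def by (subst sum.remove[OF fin, of "{}"]) auto
  also have "(\<Sum>S \<in> Pow {1..n} - {{}}. (-1) ^ card S * f (0 + sum x S))
     = (\<Sum>S \<in> Pow {1..n} - {{}}. - ((-1) ^ (card S - 1) * f (sum x S)))"
  proof (rule sum.cong)
    fix S assume S: "S \<in> Pow {1..n} - {{}}"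
    then have "finite S" "S \<noteq> {}" using finite_subset by auto
    then have "card S = Suc (card S - 1)" by (simp add: card_gt_0_iff)
    then have "(-1::real) ^ card S = - ((-1) ^ (card S - 1))"
      by (metis power_Suc mult_minus1)
    then show "(-1) ^ card S * f (0 + sum x S) = - ((-1) ^ (card S - 1) * f (sum x S))" by simp
  qed simp
  finally show ?thesis unfolding alt_sum_def dom by (simp add: sum_negf)
qed

lemma alt_sum_decomp: "alt_sum f x n = (\<Sum>k<n. DD f k x (x (Suc k)))"
proof (induction n)
  case 0 then show ?case by (simp add: alt_sum_DD DD_0)
next
  case (Suc n)
  then show ?case by (simp add: alt_sum_DD DD_Suc)
qed


lemma line_deriv:
  fixes G :: "'a::real_normed_vector \<Rightarrow> real"
  assumes "(\<lambda>t::real. G (a + t0 *\<^sub>R h + t *\<^sub>R h)) differentiable (at 0)"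
  shows "((\<lambda>t. G (a + t *\<^sub>R h)) has_real_derivative dir_deriv h G (a + t0 *\<^sub>R h)) (at t0)"
proof -
  let ?z = "a + t0 *\<^sub>R h"
  have "((\<lambda>t. G (?z + t *\<^sub>R h)) has_real_derivative deriv (\<lambda>t. G (?z + t *\<^sub>R h)) 0) (at 0)"
    using assms DERIV_deriv_iff_real_differentiable by blast
  then have "((\<lambda>t. G (?z + t *\<^sub>R h)) has_real_derivative dir_deriv h G ?z) (at 0)"
    unfolding dir_deriv_def by simp
  then have "((\<lambda>t. G (?z + (t + (- t0)) *\<^sub>R h)) has_real_derivative dir_deriv h G ?z) (at t0)"
    using DERIV_shift[of "\<lambda>t. G (?z + t *\<^sub>R h)" _ t0 "- t0"] by simp
  moreover have "(\<lambda>t. G (?z + (t + (- t0)) *\<^sub>R h)) = (\<lambda>t. G (a + t *\<^sub>R h))"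
    by (simp add: algebra_simps)
  ultimately show ?thesis by simp
qed

lemma DD_deriv:
  fixes G :: "'a::real_normed_vector \<Rightarrow> real"
  assumes "\<And>S. S \<subseteq> {1..n} \<Longrightarrow> (\<lambda>t::real. G ((y + sum x S) + t0 *\<^sub>R h + t *\<^sub>R h)) differentiable (at 0)"
  shows "((\<lambda>t. DD G n x (y + t *\<^sub>R h)) has_real_derivative DD (dir_deriv h G) n x (y + t0 *\<^sub>R h)) (at t0)"
proof -
  have "((\<lambda>t. \<Sum>S \<in> Pow {1..n}. (-1) ^ card S * G ((y + sum x S) + t *\<^sub>R h)) has_real_derivative
        (\<Sum>S \<in> Pow {1..n}. (-1) ^ card S * dir_deriv h G ((y + sum x S) + t0 *\<^sub>R h))) (at t0)"
    by (rule DERIV_sum, rule DERIV_cmult, rule line_deriv, rule assms) auto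
  then show ?thesis unfolding DD_def by (simp add: algebra_simps)
qed

lemma lemmaA:
  fixes C :: "'a::euclidean_space set"
  assumes cone: "open_convex_cone C" and cm: "completely_monotone C f"
  shows "\<forall>vs y. set vs \<subseteq> C \<longrightarrow> y \<in> C \<longrightarrow> (\<forall>i\<in>{1..n}. x i \<in> C) \<longrightarrow>
     0 \<le> (-1) ^ length vs * DD (iter_dir_deriv vs f) n x y"
proof (induction n)
  case 0
  show ?case
  proof (intro allI impI)
    fix vs y assume "set vs \<subseteq> C" "y \<in> C"
    then show "0 \<le> (-1) ^ length vs * DD (iter_dir_deriv vs f) 0 x y"
      using cm unfolding completely_monotone_def DD_0 by (cases "vs = []") auto
  qed
next
  case (Suc n)
  show ?case
  proof (intro allI impI)
    fix vs y assume vs: "set vs \<subseteq> C" and y: "y \<in> C" and xs: "\<forall>i\<in>{1..Suc n}. x i \<in> C"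
    let ?G = "iter_dir_deriv vs f"
    let ?h = "x (Suc n)"
    have h: "?h \<in> C" using xs by simp
    have xs': "\<forall>i\<in>{1..n}. x i \<in> C" using xs by auto
    have sm: "\<forall>vs v. \<forall>x\<in>C. (\<lambda>t::real. iter_dir_deriv vs f (x + t *\<^sub>R v)) differentiable (at 0)"
      using cm unfolding completely_monotone_def smooth_on_def by blast
    have ymem: "y + t *\<^sub>R ?h \<in> C" if "0 \<le> t" for t :: real
    proof (cases "t = 0")
      case True then show ?thesis using y by simp
    next
      case False
      then have "t *\<^sub>R ?h \<in> C" using cone_scale[OF cone h] that by simp
      then show ?thesis using cone_add[OF cone y] by simp
    qed
    define \<psi> where "\<psi> t = (-1) ^ length vs * DD ?G n x (y + t *\<^sub>R ?h)" for t :: real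
    have psi_eq: "\<psi> = (\<lambda>t. (-1) ^ length vs * DD ?G n x (y + t *\<^sub>R ?h))"
      by (rule ext) (simp only: \<psi>_def)
    have "\<psi> 1 \<le> \<psi> 0"
    proof (rule DERIV_nonpos_imp_nonincreasing[of 0 1 \<psi>])
      fix t :: real assume t: "0 \<le> t" "t \<le> 1"
      have der: "((\<lambda>t. DD ?G n x (y + t *\<^sub>R ?h)) has_real_derivative DD (dir_deriv ?h ?G) n x (y + t *\<^sub>R ?h)) (at t)"
      proof (rule DD_deriv)
        fix S assume S: "S \<subseteq> {1..n}"
        have fS: "finite S" using S finite_subset by blast
        have "(y + t *\<^sub>R ?h) + sum x S \<in> C"
          using cone_sum[OF cone fS ymem[OF t(1)]] S xs' by auto
        then have "y + sum x S + t *\<^sub>R ?h \<in> C" by (simp add: algebra_simps)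
        then have "(\<lambda>s::real. ?G ((y + sum x S + t *\<^sub>R ?h) + s *\<^sub>R ?h)) differentiable (at 0)"
          using sm by blast
        then show "(\<lambda>s::real. ?G ((y + sum x S) + t *\<^sub>R ?h + s *\<^sub>R ?h)) differentiable (at 0)" by simp
      qed
      have "dir_deriv ?h ?G = iter_dir_deriv (?h # vs) f" by simp
      have IH: "0 \<le> (-1) ^ length (?h # vs) * DD (iter_dir_deriv (?h # vs) f) n x (y + t *\<^sub>R ?h)"
      proof -
        have "set (?h # vs) \<subseteq> C" using vs h by simp
        then show ?thesis using Suc.IH ymem[OF t(1)] xs' by blast
      qed
      have IH': "(-1) ^ length vs * DD (dir_deriv ?h ?G) n x (y + t *\<^sub>R ?h) \<le> 0"
      proof -
        have "(-1) ^ length (?h # vs) * DD (iter_dir_deriv (?h # vs) f) n x (y + t *\<^sub>R ?h)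
           = - ((-1) ^ length vs * DD (dir_deriv ?h ?G) n x (y + t *\<^sub>R ?h))"
          by simp
        then show ?thesis using IH by linarith
      qed
      have "(\<psi> has_real_derivative (-1) ^ length vs * DD (dir_deriv ?h ?G) n x (y + t *\<^sub>R ?h)) (at t)"
        unfolding psi_eq by (rule DERIV_cmult[OF der])
      then show "\<exists>d. (\<psi> has_real_derivative d) (at t) \<and> d \<le> 0"
        using IH' by blast
    qed simp
    have p0: "\<psi> 0 = (-1) ^ length vs * DD ?G n x y" by (simp add: \<psi>_def)
    have p1: "\<psi> 1 = (-1) ^ length vs * DD ?G n x (y + ?h)" by (simp add: \<psi>_def)
    have "(-1) ^ length vs * DD ?G (Suc n) x y = \<psi> 0 - \<psi> 1"
      unfolding p0 p1 DD_Suc by (rule right_diff_distrib)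
    then show "0 \<le> (-1) ^ length vs * DD ?G (Suc n) x y"
      using \<open>\<psi> 1 \<le> \<psi> 0\<close> by linarith
  qed
qed


lemma closure_DD:
  fixes C :: "'a::euclidean_space set"
  assumes cone: "open_convex_cone C" and cm: "completely_monotone C f"
    and gc: "continuous_on (closure C) g" and gf: "\<forall>y\<in>C. g y = f y"
    and xs: "\<forall>i\<in>{1..n}. x i \<in> closure C" and y: "y \<in> closure C" and c: "c \<in> C"
  shows "0 \<le> DD g n x y"
proof -
  define e where "e m = inverse (real (Suc m))" for m
  have e0: "e m > 0" for m unfolding e_def by simp
  have elim: "e \<longlonglongrightarrow> 0" unfolding e_def by (rule LIMSEQ_inverse_real_of_nat)
  define xm where "xm m i = x i + e m *\<^sub>R c" for m i
  define ym where "ym m = y + e m *\<^sub>R c" for m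
  have xmC: "\<forall>i\<in>{1..n}. xm m i \<in> C" for m
  proof
    fix i assume "i \<in> {1..n}"
    then have "x i \<in> closure C" using xs by blast
    then show "xm m i \<in> C" unfolding xm_def by (rule cone_closure_shift[OF cone _ c e0])
  qed
  have ymC: "ym m \<in> C" for m
    unfolding ym_def by (rule cone_closure_shift[OF cone y c e0])
  have ptC: "ym m + sum (xm m) S \<in> C" if "S \<subseteq> {1..n}" for m S
  proof (rule cone_sum[OF cone _ ymC])
    show "finite S" using that finite_subset by blast
    show "\<forall>i\<in>S. xm m i \<in> C" using xmC that by blast
  qed
  have pos: "0 \<le> DD g n (xm m) (ym m)" for m
  proof -
    have "set ([]::'a list) \<subseteq> C" by simp
    then have "0 \<le> (-1) ^ length ([]::'a list) * DD (iter_dir_deriv [] f) n (xm m) (ym m)"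
      using lemmaA[OF cone cm, of n "xm m"] xmC ymC by blast
    then have "0 \<le> DD f n (xm m) (ym m)" by simp
    also have "DD f n (xm m) (ym m) = DD g n (xm m) (ym m)"
      unfolding DD_def
    proof (rule sum.cong)
      fix S assume "S \<in> Pow {1..n}"
      then have "ym m + sum (xm m) S \<in> C" using ptC by blast
      then show "(-1) ^ card S * f (ym m + sum (xm m) S) = (-1) ^ card S * g (ym m + sum (xm m) S)"
        using gf by simp
    qed simp
    finally show ?thesis .
  qed
  have lim: "(\<lambda>m. DD g n (xm m) (ym m)) \<longlonglongrightarrow> DD g n x y"
    unfolding DD_def
  proof (intro tendsto_sum tendsto_mult_left)
    fix S assume S: "S \<in> Pow {1..n}"
    have eq: "ym m + sum (xm m) S = (y + sum x S) + (e m * (1 + real (card S))) *\<^sub>R c" for m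
    proof -
      have "sum (xm m) S = sum x S + sum (\<lambda>i. e m *\<^sub>R c) S"
        unfolding xm_def by (rule sum.distrib)
      also have "sum (\<lambda>i. e m *\<^sub>R c) S = real (card S) *\<^sub>R (e m *\<^sub>R c)"
        by (rule sum_constant_scaleR)
      finally show ?thesis unfolding ym_def by (simp add: algebra_simps)
    qed
    have "(\<lambda>m. (y + sum x S) + (e m * (1 + real (card S))) *\<^sub>R c) \<longlonglongrightarrow> (y + sum x S) + (0 * (1 + real (card S))) *\<^sub>R c"
      by (intro tendsto_add tendsto_const tendsto_scaleR tendsto_mult elim)
    then have pl: "(\<lambda>m. ym m + sum (xm m) S) \<longlonglongrightarrow> y + sum x S"
      unfolding eq by simp
    have inC: "\<forall>m. ym m + sum (xm m) S \<in> C" using ptC S by blast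
    have lc: "y + sum x S \<in> closure C"
      unfolding closure_sequential
      by (rule exI[of _ "\<lambda>m. ym m + sum (xm m) S"]) (rule conjI[OF inC pl])
    have ev: "\<forall>\<^sub>F m in sequentially. ym m + sum (xm m) S \<in> closure C"
    proof (rule always_eventually, rule allI)
      fix m show "ym m + sum (xm m) S \<in> closure C" using inC closure_subset by blast
    qed
    show "(\<lambda>m. g (ym m + sum (xm m) S)) \<longlonglongrightarrow> g (y + sum x S)"
      by (rule continuous_on_tendsto_compose[OF gc pl lc ev])
  qed
  show ?thesis
    by (rule tendsto_lowerbound[OF lim]) (simp_all add: pos)
qed

lemma zero_in_closure:
  fixes C :: "'a::euclidean_space set"
  assumes cone: "open_convex_cone C" and c: "c \<in> C"
  shows "0 \<in> closure C"
proof -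
  have "(\<lambda>m. inverse (real (Suc m)) *\<^sub>R c) \<longlonglongrightarrow> 0 *\<^sub>R c"
    by (intro tendsto_scaleR tendsto_const LIMSEQ_inverse_real_of_nat)
  then have l: "(\<lambda>m. inverse (real (Suc m)) *\<^sub>R c) \<longlonglongrightarrow> 0" by simp
  have m: "\<forall>m. inverse (real (Suc m)) *\<^sub>R c \<in> C"
  proof
    fix m :: nat
    show "inverse (real (Suc m)) *\<^sub>R c \<in> C" by (rule cone_scale[OF cone c]) simp
  qed
  show ?thesis unfolding closure_sequential
    by (rule exI[of _ "\<lambda>m. inverse (real (Suc m)) *\<^sub>R c"]) (rule conjI[OF m l])
qed

theorem theorem4p4:
  fixes C :: "'a::euclidean_space set" and f :: "'a \<Rightarrow> real"
  assumes "open_convex_cone C"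
    and "completely_monotone C f"
  shows "(\<forall>n::nat. \<forall>x::nat \<Rightarrow> 'a. n \<ge> 1 \<longrightarrow> (\<forall>i\<in>{1..n}. x i \<in> C) \<longrightarrow> alt_sum f x n \<ge> 0)
    \<and> (\<forall>g. continuous_on (closure C) g \<and> (\<forall>y\<in>C. g y = f y) \<longrightarrow>
         (\<forall>n::nat. \<forall>x::nat \<Rightarrow> 'a. n \<ge> 1 \<longrightarrow> (\<forall>i\<in>{1..n}. x i \<in> closure C) \<longrightarrow>
            g 0 \<ge> alt_sum g x n \<and> alt_sum g x n \<ge> 0))"
proof (intro conjI allI impI)
  fix n :: nat and x :: "nat \<Rightarrow> 'a"
  assume "n \<ge> 1" and xs: "\<forall>i\<in>{1..n}. x i \<in> C"
  have "0 \<le> DD f k x (x (Suc k))" if "k < n" for k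
  proof -
    have a: "\<forall>i\<in>{1..k}. x i \<in> C" "x (Suc k) \<in> C" using xs that by auto
    have "set ([]::'a list) \<subseteq> C" by simp
    then have "0 \<le> (-1) ^ length ([]::'a list) * DD (iter_dir_deriv [] f) k x (x (Suc k))"
      using lemmaA[OF assms, of k x] a by blast
    then show ?thesis by simp
  qed
  then show "alt_sum f x n \<ge> 0" unfolding alt_sum_decomp by (intro sum_nonneg) simp
next
  fix g n and x :: "nat \<Rightarrow> 'a"
  assume g: "continuous_on (closure C) g \<and> (\<forall>y\<in>C. g y = f y)"
    and n: "n \<ge> 1" and xs: "\<forall>i\<in>{1..n}. x i \<in> closure C"
  have gc: "continuous_on (closure C) g" and gf: "\<forall>y\<in>C. g y = f y" using g by auto
  have "x 1 \<in> closure C" using xs n by simp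
  then have "C \<noteq> {}" by auto
  then obtain c where c: "c \<in> C" by blast
  have "0 \<le> DD g n x 0"
    by (rule closure_DD[OF assms gc gf xs zero_in_closure[OF assms(1) c] c])
  then show "g 0 \<ge> alt_sum g x n" unfolding alt_sum_DD by simp
  have "0 \<le> DD g k x (x (Suc k))" if "k < n" for k
  proof -
    have a: "\<forall>i\<in>{1..k}. x i \<in> closure C" "x (Suc k) \<in> closure C" using xs that by auto
    show ?thesis by (rule closure_DD[OF assms gc gf a c])
  qed
  then show "alt_sum g x n \<ge> 0" unfolding alt_sum_decomp by (intro sum_nonneg) simp
qed

end
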